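(* The set of $(w,x,y,z)\in\mathbb{R}^4$ satisfying \[ w+x+y+z = 3+wy \qquad\text{and}\qquad wy = zx \] is a smooth surface with two connected components, each diffeomorphic to a disc. One of the components, $X$, contains the point $(3,3,3,3)$, and it is distinguished from the other component by the inequalities $x>1$ and $z>1$ (equivalently, $y>1$ and $w>1$). *)

theory Defs
  imports "HOL-Analysis.Analysis"
begin

fun Ck_on :: "nat \<Rightarrow> 'a::real_normed_vector set \<Rightarrow> ('a \<Rightarrow> 'b::real_normed_vector) \<Rightarrow> bool" where
  "Ck_on 0 S f = continuous_on S f"
| "Ck_on (Suc n) S f =
     (\<exists>f'. (\<forall>x\<in>S. (f has_derivative f' x) (at x)) \<and> (\<forall>v. Ck_on n S (\<lambda>x. f' x v)))"

definition smooth_on :: "'a::real_normed_vector set \<Rightarrow> ('a \<Rightarrow> 'b::real_normed_vector) \<Rightarrow> bool" where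
  "smooth_on S f \<longleftrightarrow> open S \<and> (\<forall>n. Ck_on n S f)"

text \<open>Milnor's convention: a map on an arbitrary subset X is smooth if near every
  point of X it extends to a smooth map on an open set.\<close>

definition smooth_map :: "'a::real_normed_vector set \<Rightarrow> ('a \<Rightarrow> 'b::real_normed_vector) \<Rightarrow> bool" where
  "smooth_map X f \<longleftrightarrow>
     (\<forall>x\<in>X. \<exists>U F. open U \<and> x \<in> U \<and> smooth_on U F \<and> (\<forall>y\<in>U \<inter> X. F y = f y))"

definition diffeo_betw :: "('a::real_normed_vector \<Rightarrow> 'b::real_normed_vector) \<Rightarrow> 'a set \<Rightarrow> 'b set \<Rightarrow> bool" where
  "diffeo_betw f X Y \<longleftrightarrow>
     bij_betw f X Y \<and> smooth_map X f \<and>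
     (\<exists>g. smooth_map Y g \<and> (\<forall>x\<in>X. g (f x) = x) \<and> (\<forall>y\<in>Y. f (g y) = y))"

definition diffeomorphic_sets :: "'a::real_normed_vector set \<Rightarrow> 'b::real_normed_vector set \<Rightarrow> bool" where
  "diffeomorphic_sets X Y \<longleftrightarrow> (\<exists>f. diffeo_betw f X Y)"

definition smooth_surface :: "'a::real_normed_vector set \<Rightarrow> bool" where
  "smooth_surface M \<longleftrightarrow>
     (\<forall>p\<in>M. \<exists>W (U :: (real \<times> real) set).
        openin (top_of_set M) W \<and> p \<in> W \<and> open U \<and> diffeomorphic_sets U W)"

end

theory Submission
  imports Defs
begin

lemma Ck_mono: "Ck_on (Suc n) S f \<Longrightarrow> Ck_on n S f"
proof (induction n arbitrary: f)
  case 0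
  then obtain f' where "\<forall>x\<in>S. (f has_derivative f' x) (at x)" by auto
  then show ?case
    by (auto intro!: continuous_at_imp_continuous_on has_derivative_continuous)
next
  case (Suc n)
  then obtain f' where "\<forall>x\<in>S. (f has_derivative f' x) (at x)" "\<forall>v. Ck_on (Suc n) S (\<lambda>x. f' x v)"
    by auto
  with Suc.IH show ?case by auto
qed

lemma Ck_const: "Ck_on n S (\<lambda>x. c)"
proof (induction n arbitrary: c)
  case 0 then show ?case by auto
next
  case (Suc n)
  have "\<forall>x\<in>S. ((\<lambda>x. c) has_derivative (\<lambda>x h. 0) x) (at x)" by auto
  with Suc show ?case by (auto intro!: exI[of _ "\<lambda>x h. 0"])
qed

lemma Ck_linear: "Ck_on n S f \<Longrightarrow> bounded_linear L \<Longrightarrow> Ck_on n S (\<lambda>x. L (f x))"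
proof (induction n arbitrary: f)
  case 0 then show ?case
    by (auto intro: continuous_on_compose2[OF linear_continuous_on] )
next
  case (Suc n)
  then obtain f' where d: "\<forall>x\<in>S. (f has_derivative f' x) (at x)" and c: "\<forall>v. Ck_on n S (\<lambda>x. f' x v)"
    by auto
  have "\<forall>x\<in>S. ((\<lambda>x. L (f x)) has_derivative (\<lambda>x h. L (f' x h)) x) (at x)"
    using d Suc.prems(2) by (auto intro: bounded_linear.has_derivative)
  moreover have "\<forall>v. Ck_on n S (\<lambda>x. L (f' x v))" using c Suc.IH Suc.prems(2) by auto
  ultimately show ?case by auto
qed

lemma Ck_id: "Ck_on n S (\<lambda>x. x)"
proof (induction n)
  case 0 then show ?case by auto
next
  case (Suc n)
  have "\<forall>x\<in>S. ((\<lambda>x. x) has_derivative (\<lambda>x h. h) x) (at x)" by auto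
  then show ?case using Ck_const by (auto intro!: exI[of _ "\<lambda>x h. h"])
qed

lemma Ck_add: "Ck_on n S f \<Longrightarrow> Ck_on n S g \<Longrightarrow> Ck_on n S (\<lambda>x. f x + g x)"
proof (induction n arbitrary: f g)
  case 0 then show ?case by (auto intro: continuous_on_add)
next
  case (Suc n)
  from Suc.prems obtain f' g' where d: "\<forall>x\<in>S. (f has_derivative f' x) (at x)" "\<forall>v. Ck_on n S (\<lambda>x. f' x v)"
    "\<forall>x\<in>S. (g has_derivative g' x) (at x)" "\<forall>v. Ck_on n S (\<lambda>x. g' x v)"
    by auto
  have "\<forall>x\<in>S. ((\<lambda>x. f x + g x) has_derivative (\<lambda>x h. f' x h + g' x h) x) (at x)"
    using d by (auto intro: has_derivative_add)
  moreover have "\<forall>v. Ck_on n S (\<lambda>x. f' x v + g' x v)" using d Suc.IH by auto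
  ultimately show ?case by auto
qed

lemma Ck_diff: "Ck_on n S f \<Longrightarrow> Ck_on n S g \<Longrightarrow> Ck_on n S (\<lambda>x. f x - g x)"
proof (induction n arbitrary: f g)
  case 0 then show ?case by (auto intro: continuous_on_diff)
next
  case (Suc n)
  from Suc.prems obtain f' g' where d: "\<forall>x\<in>S. (f has_derivative f' x) (at x)" "\<forall>v. Ck_on n S (\<lambda>x. f' x v)"
    "\<forall>x\<in>S. (g has_derivative g' x) (at x)" "\<forall>v. Ck_on n S (\<lambda>x. g' x v)"
    by auto
  have "\<forall>x\<in>S. ((\<lambda>x. f x - g x) has_derivative (\<lambda>x h. f' x h - g' x h) x) (at x)"
    using d by (auto intro: has_derivative_diff)
  moreover have "\<forall>v. Ck_on n S (\<lambda>x. f' x v - g' x v)" using d Suc.IH by auto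
  ultimately show ?case by auto
qed

lemma Ck_Pair: "Ck_on n S f \<Longrightarrow> Ck_on n S g \<Longrightarrow> Ck_on n S (\<lambda>x. (f x, g x))"
proof (induction n arbitrary: f g)
  case 0 then show ?case by (auto intro: continuous_on_Pair)
next
  case (Suc n)
  from Suc.prems obtain f' g' where d: "\<forall>x\<in>S. (f has_derivative f' x) (at x)" "\<forall>v. Ck_on n S (\<lambda>x. f' x v)"
    "\<forall>x\<in>S. (g has_derivative g' x) (at x)" "\<forall>v. Ck_on n S (\<lambda>x. g' x v)"
    by auto
  have "\<forall>x\<in>S. ((\<lambda>x. (f x, g x)) has_derivative (\<lambda>x h. (f' x h, g' x h)) x) (at x)"
    using d by (auto intro: has_derivative_Pair)
  moreover have "\<forall>v. Ck_on n S (\<lambda>x. (f' x v, g' x v))" using d Suc.IH by auto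
  ultimately show ?case by auto
qed

lemma Ck_mult:
  fixes f g :: "'a::real_normed_vector \<Rightarrow> real"
  shows "Ck_on n S f \<Longrightarrow> Ck_on n S g \<Longrightarrow> Ck_on n S (\<lambda>x. f x * g x)"
proof (induction n arbitrary: f g)
  case 0 then show ?case by (auto intro: continuous_on_mult)
next
  case (Suc n)
  from Suc.prems obtain f' g' where d: "\<forall>x\<in>S. (f has_derivative f' x) (at x)" "\<forall>v. Ck_on n S (\<lambda>x. f' x v)"
    "\<forall>x\<in>S. (g has_derivative g' x) (at x)" "\<forall>v. Ck_on n S (\<lambda>x. g' x v)"
    by auto
  have f: "Ck_on n S f" "Ck_on n S g" using Suc.prems Ck_mono by auto
  have "\<forall>x\<in>S. ((\<lambda>x. f x * g x) has_derivative (\<lambda>x h. f x * g' x h + f' x h * g x) x) (at x)"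
    using d by (auto intro: has_derivative_mult)
  moreover have "\<forall>v. Ck_on n S (\<lambda>x. f x * g' x v + f' x v * g x)" using d Suc.IH f
    by (auto intro!: Ck_add)
  ultimately show ?case by auto
qed

lemma Ck_inverse:
  fixes f :: "'a::real_normed_vector \<Rightarrow> real"
  shows "Ck_on n S f \<Longrightarrow> (\<forall>x\<in>S. f x \<noteq> 0) \<Longrightarrow> Ck_on n S (\<lambda>x. inverse (f x))"
proof (induction n arbitrary: f)
  case 0 then show ?case by (auto intro: continuous_on_inverse)
next
  case (Suc n)
  from Suc.prems obtain f' where d: "\<forall>x\<in>S. (f has_derivative f' x) (at x)" "\<forall>v. Ck_on n S (\<lambda>x. f' x v)"
    by auto
  have f: "Ck_on n S f" using Ck_mono[OF Suc.prems(1)] .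
  have "\<forall>x\<in>S. ((\<lambda>x. inverse (f x)) has_derivative (\<lambda>x h. - (inverse (f x) * f' x h * inverse (f x))) x) (at x)"
    using d Suc.prems by (auto intro: has_derivative_inverse)
  moreover have "\<forall>v. Ck_on n S (\<lambda>x. - (inverse (f x) * f' x v * inverse (f x)))"
  proof
    fix v
    have i: "Ck_on n S (\<lambda>x. inverse (f x))" by (rule Suc.IH[OF f Suc.prems(2)])
    have "Ck_on n S (\<lambda>x. 0 - (inverse (f x) * f' x v * inverse (f x)))"
      by (rule Ck_diff[OF Ck_const Ck_mult[OF Ck_mult[OF i d(2)[rule_format]] i]])
    then show "Ck_on n S (\<lambda>x. - (inverse (f x) * f' x v * inverse (f x)))" by simp
  qed
  ultimately show ?case by auto
qed

lemma Ck_sqrt: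
  fixes f :: "'a::real_normed_vector \<Rightarrow> real"
  shows "Ck_on n S f \<Longrightarrow> (\<forall>x\<in>S. f x > 0) \<Longrightarrow> Ck_on n S (\<lambda>x. sqrt (f x))"
proof (induction n arbitrary: f)
  case 0 then show ?case by (auto intro: continuous_on_real_sqrt)
next
  case (Suc n)
  from Suc.prems obtain f' where d: "\<forall>x\<in>S. (f has_derivative f' x) (at x)" "\<forall>v. Ck_on n S (\<lambda>x. f' x v)"
    by auto
  have f: "Ck_on n S f" using Ck_mono[OF Suc.prems(1)] .
  have "\<forall>x\<in>S. ((\<lambda>x. sqrt (f x)) has_derivative (\<lambda>x h. f' x h * (inverse (sqrt (f x)) / 2)) x) (at x)"
  proof
    fix x assume x: "x \<in> S"
    have p: "0 < f x" using Suc.prems(2) x by auto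
    show "((\<lambda>x. sqrt (f x)) has_derivative (\<lambda>h. f' x h * (inverse (sqrt (f x)) / 2))) (at x)"
      by (rule DERIV_compose_FDERIV[OF DERIV_real_sqrt[OF p] d(1)[rule_format, OF x]])
  qed
  moreover have "\<forall>v. Ck_on n S (\<lambda>x. f' x v * (inverse (sqrt (f x)) / 2))"
  proof
    fix v
    have i: "Ck_on n S (\<lambda>x. sqrt (f x))" by (rule Suc.IH[OF f Suc.prems(2)])
    have "Ck_on n S (\<lambda>x. f' x v * (inverse (sqrt (f x)) * inverse 2))"
    proof -
      have j: "Ck_on n S (\<lambda>x. inverse (sqrt (f x)))" by (rule Ck_inverse[OF i]) (use Suc.prems(2) in auto)
      show ?thesis by (rule Ck_mult[OF d(2)[rule_format] Ck_mult[OF j Ck_const]])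
    qed
    then show "Ck_on n S (\<lambda>x. f' x v * (inverse (sqrt (f x)) / 2))" by (simp only: divide_inverse)
  qed
  ultimately show ?case by auto
qed

definition sm :: "'a::real_normed_vector set \<Rightarrow> ('a \<Rightarrow> 'b::real_normed_vector) \<Rightarrow> bool" where
  "sm S f \<longleftrightarrow> (\<forall>n. Ck_on n S f)"

lemma sm_const[intro!]: "sm S (\<lambda>x. c)" by (simp add: sm_def Ck_const)
lemma sm_id[intro!]: "sm S (\<lambda>x. x)" by (simp add: sm_def Ck_id)
lemma sm_fst[intro!]: "sm S f \<Longrightarrow> sm S (\<lambda>x. fst (f x))"
  by (simp add: sm_def Ck_linear bounded_linear_fst)
lemma sm_snd[intro!]: "sm S f \<Longrightarrow> sm S (\<lambda>x. snd (f x))"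
  by (simp add: sm_def Ck_linear bounded_linear_snd)
lemma sm_add[intro!]: "sm S f \<Longrightarrow> sm S g \<Longrightarrow> sm S (\<lambda>x. f x + g x)"
  by (simp add: sm_def Ck_add)
lemma sm_diff[intro!]: "sm S f \<Longrightarrow> sm S g \<Longrightarrow> sm S (\<lambda>x. f x - g x)"
  by (simp add: sm_def Ck_diff)
lemma sm_Pair[intro!]: "sm S f \<Longrightarrow> sm S g \<Longrightarrow> sm S (\<lambda>x. (f x, g x))"
  by (simp add: sm_def Ck_Pair)
lemma sm_mult[intro!]: "sm S f \<Longrightarrow> sm S g \<Longrightarrow> sm S (\<lambda>x. f x * g x :: real)"
  by (simp add: sm_def Ck_mult)
lemma sm_uminus[intro!]: "sm S f \<Longrightarrow> sm S (\<lambda>x. - f x :: real)"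
proof -
  assume "sm S f"
  then have "sm S (\<lambda>x. 0 - f x)" by (intro sm_diff sm_const)
  then show ?thesis by simp
qed
lemma sm_inverse: "sm S f \<Longrightarrow> (\<forall>x\<in>S. f x \<noteq> 0) \<Longrightarrow> sm S (\<lambda>x. inverse (f x) :: real)"
  by (simp add: sm_def Ck_inverse)
lemma sm_divide: "sm S f \<Longrightarrow> sm S g \<Longrightarrow> (\<forall>x\<in>S. g x \<noteq> 0) \<Longrightarrow> sm S (\<lambda>x. f x / g x :: real)"
proof -
  assume "sm S f" "sm S g" "\<forall>x\<in>S. g x \<noteq> 0"
  then have "sm S (\<lambda>x. f x * inverse (g x))" by (intro sm_mult sm_inverse)
  then show ?thesis by (simp add: divide_inverse)
qed
lemma sm_sqrt: "sm S f \<Longrightarrow> (\<forall>x\<in>S. f x > 0) \<Longrightarrow> sm S (\<lambda>x. sqrt (f x))"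
  by (simp add: sm_def Ck_sqrt)
lemma sm_power[intro!]: "sm S f \<Longrightarrow> sm S (\<lambda>x. f x ^ n :: real)"
proof (induction n)
  case 0 then show ?case by (simp add: sm_const)
next
  case (Suc n) then show ?case by (simp add: sm_mult)
qed
lemma sm_numeral[intro!]: "sm S (\<lambda>x. numeral k)" by (rule sm_const)

lemma sm_cont: "sm S f \<Longrightarrow> continuous_on S f"
proof -
  assume "sm S f" then have "Ck_on 0 S f" unfolding sm_def by blast
  then show ?thesis by simp
qed

lemma smooth_on_sm: "open S \<Longrightarrow> sm S f \<Longrightarrow> smooth_on S f"
  by (simp add: smooth_on_def sm_def)

lemma sm_subset: "sm S f \<Longrightarrow> T \<subseteq> S \<Longrightarrow> sm T f"
proof -
  have "Ck_on n S f \<Longrightarrow> T \<subseteq> S \<Longrightarrow> Ck_on n T f" for n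
  proof (induction n arbitrary: f)
    case 0 then show ?case by (auto intro: continuous_on_subset)
  next
    case (Suc n)
    from Suc.prems(1) obtain f' where d: "\<forall>x\<in>S. (f has_derivative f' x) (at x)" "\<forall>v. Ck_on n S (\<lambda>x. f' x v)"
      by auto
    have "\<forall>x\<in>T. (f has_derivative f' x) (at x)" using d Suc.prems(2) by blast
    moreover have "\<forall>v. Ck_on n T (\<lambda>x. f' x v)" using d(2) Suc.IH Suc.prems(2) by blast
    ultimately show ?case unfolding Ck_on.simps by blast
  qed
  then show "sm S f \<Longrightarrow> T \<subseteq> S \<Longrightarrow> sm T f" by (simp add: sm_def)
qed

definition psi :: "real \<Rightarrow> real" where "psi v = v + sqrt (v^2 + 1)"
definition pinv :: "real \<Rightarrow> real" where "pinv s = (s^2 - 1) / (2 * s)"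
definition xw :: "real \<Rightarrow> real" where "xw z = sqrt (4 + z^2)"
definition xa :: "real \<Rightarrow> real \<Rightarrow> real" where "xa z v = (xw z + psi v + z) / 2"
definition xc :: "real \<Rightarrow> real \<Rightarrow> real" where "xc z v = (xw z + psi v - z) / 2"
definition xb :: "real \<Rightarrow> real \<Rightarrow> real" where "xb z v = (xa z v + (xc z v)^2) / (xa z v * xc z v - 1)"
definition xd :: "real \<Rightarrow> real \<Rightarrow> real" where "xd z v = (xc z v + (xa z v)^2) / (xa z v * xc z v - 1)"

lemma psi_pos: "psi v > 0"
proof -
  have "sqrt (v^2 + 1) > sqrt (v^2)" by (rule real_sqrt_less_mono) simp
  then have "sqrt (v^2 + 1) > \<bar>v\<bar>" by simp
  then show ?thesis unfolding psi_def by linarith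
qed

lemma pinv_psi: "pinv (psi v) = v"
proof -
  have p: "psi v > 0" by (rule psi_pos)
  have s: "(sqrt (v^2 + 1))^2 = v^2 + 1" by simp
  have "(psi v)^2 - 1 = 2 * psi v * v" unfolding psi_def using s by (simp add: power2_eq_square algebra_simps)
  then show ?thesis unfolding pinv_def using p by (simp add: field_simps)
qed

lemma psi_pinv: "s > 0 \<Longrightarrow> psi (pinv s) = s"
proof -
  assume s: "s > 0"
  have "(pinv s)^2 + 1 = ((s^2 + 1) / (2 * s)) ^ 2" unfolding pinv_def using s
    by (simp add: field_simps power2_eq_square)
  then have "sqrt ((pinv s)^2 + 1) = (s^2 + 1) / (2 * s)" using s by simp
  then show ?thesis unfolding psi_def using s by (simp add: pinv_def field_simps power2_eq_square)
qed

lemma xw_pos: "xw z > 0" unfolding xw_def by (simp add: add_pos_nonneg)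
lemma xw_sq: "(xw z)^2 = 4 + z^2" unfolding xw_def by (simp add: add_nonneg_nonneg)
lemma xw_ge: "xw z > \<bar>z\<bar>"
proof -
  have "sqrt (4 + z^2) > sqrt (z^2)" by (rule real_sqrt_less_mono) simp
  then show ?thesis unfolding xw_def by simp
qed

lemma xac: "xa z v * xc z v - 1 = psi v * (2 * xw z + psi v) / 4"
proof -
  have "xa z v * xc z v = ((xw z + psi v)^2 - z^2) / 4" unfolding xa_def xc_def
    by (simp add: field_simps power2_eq_square)
  then show ?thesis using xw_sq[of z] by (simp add: field_simps power2_eq_square)
qed

lemma xac_pos: "xa z v * xc z v - 1 > 0"
  unfolding xac using psi_pos[of v] xw_pos[of z] by simp

lemma xa_pos: "xa z v > 0" unfolding xa_def using xw_ge[of z] psi_pos[of v] by (simp add: abs_less_iff)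
lemma xc_pos: "xc z v > 0" unfolding xc_def using xw_ge[of z] psi_pos[of v] by (simp add: abs_less_iff)
lemma xb_pos: "xb z v > 0" unfolding xb_def using xa_pos xc_pos xac_pos
  by (simp add: add_pos_nonneg)
lemma xd_pos: "xd z v > 0" unfolding xd_def using xa_pos xc_pos xac_pos
  by (simp add: add_pos_nonneg)

lemma xeq1: "xa z v * xb z v = xc z v + xd z v"
  using xac_pos[of z v] unfolding xb_def xd_def
  by (simp add: field_simps power2_eq_square)
lemma xeq2: "xc z v * xd z v = xa z v + xb z v"
  using xac_pos[of z v] unfolding xb_def xd_def
  by (simp add: field_simps power2_eq_square)

lemma sm_psi: "sm U V \<Longrightarrow> sm U (\<lambda>x. psi (V x))"
  unfolding psi_def by (intro sm_add sm_sqrt sm_power sm_const) (auto simp: add_nonneg_pos)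
lemma sm_xw: "sm U Z \<Longrightarrow> sm U (\<lambda>x. xw (Z x))"
  unfolding xw_def by (intro sm_add sm_sqrt sm_power sm_const) (auto simp: add_pos_nonneg)
lemma sm_xa: "sm U Z \<Longrightarrow> sm U V \<Longrightarrow> sm U (\<lambda>x. xa (Z x) (V x))"
  unfolding xa_def by (intro sm_add sm_divide sm_psi sm_xw sm_const) auto
lemma sm_xc: "sm U Z \<Longrightarrow> sm U V \<Longrightarrow> sm U (\<lambda>x. xc (Z x) (V x))"
  unfolding xc_def by (intro sm_add sm_diff sm_divide sm_psi sm_xw sm_const) auto
lemma sm_xb: "sm U Z \<Longrightarrow> sm U V \<Longrightarrow> sm U (\<lambda>x. xb (Z x) (V x))"
  unfolding xb_def using xac_pos
  by (intro sm_add sm_diff sm_mult sm_divide sm_power sm_xa sm_xc sm_const) (auto simp: less_le)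
lemma sm_xd: "sm U Z \<Longrightarrow> sm U V \<Longrightarrow> sm U (\<lambda>x. xd (Z x) (V x))"
  unfolding xd_def using xac_pos
  by (intro sm_add sm_diff sm_mult sm_divide sm_power sm_xa sm_xc sm_const) (auto simp: less_le)

definition yw :: "real \<Rightarrow> real \<Rightarrow> real" where "yw t v = sqrt (4 + (t * v)^2)"
definition yr :: "real \<Rightarrow> real" where "yr v = sqrt (v^2 + 4)"
definition yq :: "real \<Rightarrow> real" where "yq v = yr v - v"
definition yxi :: "real \<Rightarrow> real \<Rightarrow> real" where "yxi t v = yw t v * (v * yq v - 1)"
definition ya :: "real \<Rightarrow> real \<Rightarrow> real" where "ya t v = (yxi t v + t * v) / 2"
definition yc :: "real \<Rightarrow> real \<Rightarrow> real" where "yc t v = (yxi t v - t * v) / 2"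
definition yK :: "real \<Rightarrow> real \<Rightarrow> real" where "yK t v = yw t v * yq v - t"
definition yL :: "real \<Rightarrow> real \<Rightarrow> real" where "yL t v = yw t v * yq v + t"
definition yB :: "real \<Rightarrow> real \<Rightarrow> real" where
  "yB t v = 2 * yL t v - 2 * yw t v * yK t v + v * (yK t v)^2 + yw t v * t^2 * v / (yw t v + 2)"
definition yD :: "real \<Rightarrow> real \<Rightarrow> real" where
  "yD t v = 2 * yK t v - 2 * yw t v * yL t v + v * (yL t v)^2 + yw t v * t^2 * v / (yw t v + 2)"
definition yb :: "real \<Rightarrow> real \<Rightarrow> real" where "yb t v = - 2 * yB t v / ((yw t v)^2 * (yq v)^3)"
definition yd :: "real \<Rightarrow> real \<Rightarrow> real" where "yd t v = - 2 * yD t v / ((yw t v)^2 * (yq v)^3)"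

lemma yw_sq: "(yw t v)^2 = 4 + (t * v)^2" unfolding yw_def by (simp add: add_nonneg_nonneg)
lemma yw_ge2: "yw t v \<ge> 2"
proof -
  have "sqrt 4 \<le> sqrt (4 + (t * v)^2)" by (rule real_sqrt_le_mono) simp
  then show ?thesis unfolding yw_def by simp
qed
lemma yw_pos: "yw t v > 0" using yw_ge2[of t v] by linarith
lemma yr_sq: "(yr v)^2 = v^2 + 4" unfolding yr_def by (simp add: add_nonneg_nonneg)
lemma yr_gt: "yr v > \<bar>v\<bar>"
proof -
  have "sqrt (v^2) < sqrt (v^2 + 4)" by (rule real_sqrt_less_mono) simp
  then show ?thesis unfolding yr_def by simp
qed
lemma yq_pos: "yq v > 0" unfolding yq_def using yr_gt[of v] by (simp add: abs_less_iff)
lemma yvq: "2 - v * yq v = (yq v)^2 / 2"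
  unfolding yq_def using yr_sq[of v] by (simp add: power2_eq_square field_simps)

lemma yac: "ya t v * yc t v - 1 = - ((yw t v)^2 * v * (yq v)^3) / 8"
proof -
  define W where "W = yw t v"
  define Q where "Q = yq v"
  have W2: "W^2 = 4 + (t * v)^2" unfolding W_def by (rule yw_sq)
  have Q2: "v * Q = 2 - Q^2/2" unfolding Q_def using yvq[of v] by simp
  have "ya t v * yc t v - 1 = ((W * (v * Q - 1))^2 - (t * v)^2) / 4 - 1"
    unfolding ya_def yc_def yxi_def W_def Q_def by (simp add: power2_eq_square field_simps)
  also have "\<dots> = ((W * (v * Q - 1))^2 - (W^2 - 4)) / 4 - 1"
    using W2 by simp
  also have "\<dots> = (W^2 * (v * Q - 1)^2 - W^2) / 4"
    by (simp add: power2_eq_square field_simps)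
  also have "\<dots> = W^2 * (v * Q) * (v * Q - 2) / 4" by (simp add: power2_eq_square field_simps)
  also have "\<dots> = - (W^2 * v * Q^3) / 8" 
    by (subst (2) Q2) (simp add: power2_eq_square power3_eq_cube field_simps)
  finally show ?thesis unfolding W_def Q_def .
qed

lemma yapc: "ya t v + (yc t v)^2 = v * yB t v / 4"
proof -
  define W where "W = yw t v"
  have W2: "W^2 = 4 + (t * v)^2" unfolding W_def by (rule yw_sq)
  have Wp: "W + 2 > 0" using yw_pos[of t v] unfolding W_def by simp
  have e: "W * (W - 2) = W * t^2 * v^2 / (W + 2)"
  proof -
    have "(W - 2) * (W + 2) = t^2 * v^2" using W2 by (simp add: power2_eq_square field_simps)
    then show ?thesis using Wp by (simp add: field_simps)
  qed
  have "ya t v + (yc t v)^2 = (-2 * W + 2 * v * yL t v + W^2 - 2 * W * v * yK t v + v^2 * (yK t v)^2) / 4"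
    unfolding ya_def yc_def yxi_def yK_def yL_def W_def by (simp add: power2_eq_square field_simps)
  also have "\<dots> = (W * (W - 2) + v * (2 * yL t v - 2 * W * yK t v + v * (yK t v)^2)) / 4"
    by (simp add: power2_eq_square field_simps)
  also have "\<dots> = v * yB t v / 4" unfolding e yB_def W_def[symmetric]
    by (simp add: power2_eq_square field_simps)
  finally show ?thesis .
qed

lemma ycpa: "yc t v + (ya t v)^2 = v * yD t v / 4"
proof -
  define W where "W = yw t v"
  have W2: "W^2 = 4 + (t * v)^2" unfolding W_def by (rule yw_sq)
  have Wp: "W + 2 > 0" using yw_pos[of t v] unfolding W_def by simp
  have e: "W * (W - 2) = W * t^2 * v^2 / (W + 2)"
  proof -
    have "(W - 2) * (W + 2) = t^2 * v^2" using W2 by (simp add: power2_eq_square field_simps)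
    then show ?thesis using Wp by (simp add: field_simps)
  qed
  have "yc t v + (ya t v)^2 = (-2 * W + 2 * v * yK t v + W^2 - 2 * W * v * yL t v + v^2 * (yL t v)^2) / 4"
    unfolding ya_def yc_def yxi_def yK_def yL_def W_def by (simp add: power2_eq_square field_simps)
  also have "\<dots> = (W * (W - 2) + v * (2 * yK t v - 2 * W * yL t v + v * (yL t v)^2)) / 4"
    by (simp add: power2_eq_square field_simps)
  also have "\<dots> = v * yD t v / 4" unfolding e yD_def W_def[symmetric]
    by (simp add: power2_eq_square field_simps)
  finally show ?thesis .
qed

lemma ybE: "yb t v * (ya t v * yc t v - 1) = ya t v + (yc t v)^2"
  unfolding yac yapc yb_def using yw_pos[of t v] yq_pos[of v]
  by (simp add: field_simps)
lemma ydE: "yd t v * (ya t v * yc t v - 1) = yc t v + (ya t v)^2"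
  unfolding yac ycpa yd_def using yw_pos[of t v] yq_pos[of v]
  by (simp add: field_simps)

lemma y0: "ya t 0 = -1" "yc t 0 = -1" "yb t 0 = (4 - 3 * t)/8" "yd t 0 = (4 + 3 * t)/8"
proof -
  have w: "yw t 0 = 2" unfolding yw_def by simp
  have q: "yq 0 = 2" unfolding yq_def yr_def by simp
  show "ya t 0 = -1" "yc t 0 = -1" unfolding ya_def yc_def yxi_def w q by simp_all
  show "yb t 0 = (4 - 3 * t)/8" unfolding yb_def yB_def yK_def yL_def w q by (simp add: field_simps)
  show "yd t 0 = (4 + 3 * t)/8" unfolding yd_def yD_def yK_def yL_def w q by (simp add: field_simps)
qed

lemma yeqs: "ya t v * yb t v = yc t v + yd t v \<and> yc t v * yd t v = ya t v + yb t v"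
proof (cases "v = 0")
  case True then show ?thesis using y0[of t] by (simp add: field_simps)
next
  case False
  define E where "E = ya t v * yc t v - 1"
  have E0: "E \<noteq> 0" unfolding E_def yac using False yw_pos[of t v] yq_pos[of v] by simp
  have b: "yb t v * E = ya t v + (yc t v)^2" unfolding E_def by (rule ybE)
  have d: "yd t v * E = yc t v + (ya t v)^2" unfolding E_def by (rule ydE)
  have "(ya t v * yb t v - yc t v - yd t v) * E = 0"
    using b d unfolding E_def by (simp add: power2_eq_square field_simps)
  moreover have "(yc t v * yd t v - ya t v - yb t v) * E = 0"
    using b d unfolding E_def by (simp add: power2_eq_square field_simps)
  ultimately show ?thesis using E0 by simp
qed

definition SS :: "real \<Rightarrow> real \<Rightarrow> real \<Rightarrow> real \<Rightarrow> bool" where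
  "SS a b c d \<longleftrightarrow> a * b = c + d \<and> c * d = a + b"

lemma SS_b: "SS a b c d \<Longrightarrow> b * (a * c - 1) = a + c^2"
proof -
  assume s: "SS a b c d"
  then have d: "d = a * b - c" and e: "c * d = a + b" unfolding SS_def by auto
  show ?thesis using e unfolding d by (simp add: power2_eq_square algebra_simps)
qed

lemma SS_d: "SS a b c d \<Longrightarrow> d * (a * c - 1) = c + a^2"
proof -
  assume s: "SS a b c d"
  then have d: "d = a * b - c" and e: "c * d = a + b" unfolding SS_def by auto
  have "a * b * c = a + b + c^2" using e unfolding d by (simp add: power2_eq_square algebra_simps)
  then have "a * (a * b * c) = a * (a + b + c^2)" by simp
  then show ?thesis unfolding d by (simp add: power2_eq_square algebra_simps)
qed

lemma SS_pos: "SS a b c d \<Longrightarrow> (c > 0 \<and> d > 0) \<longleftrightarrow> (a > 0 \<and> b > 0)"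
proof -
  assume s: "SS a b c d"
  have 1: "a > 0 \<and> b > 0" if "x * y = a + b" "a * b = x + y" "x > 0" "y > 0" for a b x y :: real
  proof -
    have "x * y > 0" using that(3,4) by simp
    then have ab: "a + b > 0" using that(1) by linarith
    have "a * b > 0" using that(2-4) by simp
    then have "(a > 0 \<and> b > 0) \<or> (a < 0 \<and> b < 0)" by (simp add: zero_less_mult_iff)
    then show ?thesis using ab by auto
  qed
  show ?thesis using 1[of c d a b] 1[of a b c d] s unfolding SS_def by auto
qed

lemma SS_ident: "SS a b c d \<Longrightarrow> (a - c) * (a + c - 1) * (2 - 2 * c) = 2 * (a * c - 1) * (b * (a + c - 2) - (a + c))"
proof -
  assume s: "SS a b c d"
  have "b * (a * c - 1) * (a + c - 2) = (a + c^2) * (a + c - 2)" using SS_b[OF s] by simp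
  then show ?thesis by (simp add: power2_eq_square algebra_simps)
qed

lemma S_iff: "((w::real) + x + y + z = 3 + w * y \<and> w * y = z * x) \<longleftrightarrow> SS (w - 1) (y - 1) (x - 1) (z - 1)"
  unfolding SS_def by (auto simp: algebra_simps)

definition yw0 :: "real \<Rightarrow> real \<Rightarrow> real" where "yw0 a c = sqrt (4 + (a - c)^2)"
definition yy :: "real \<Rightarrow> real \<Rightarrow> real" where "yy a c = 1 + (a + c) / yw0 a c"
definition yv :: "real \<Rightarrow> real \<Rightarrow> real" where "yv a c = yy a c / sqrt (4 - 2 * yy a c)"
definition yt :: "real \<Rightarrow> real \<Rightarrow> real \<Rightarrow> real" where
  "yt a b c = (if yv a c = 0 then (4 - 8 * b) / 3 else (a - c) / yv a c)"
definition yR :: "real \<Rightarrow> real \<Rightarrow> real \<Rightarrow> real" where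
  "yR a b c = 2 * (b * (a + c - 2) - (a + c)) / ((a + c - 1) * ((a - c) - (a + c) + 2))"
definition yT2 :: "real \<Rightarrow> real \<Rightarrow> real \<Rightarrow> real" where
  "yT2 a b c = - ((yw0 a c)^2 * (yq (yv a c))^3 * yR a b c) / 8"

lemma yw0_pos: "yw0 a c > 0" unfolding yw0_def by (simp add: add_pos_nonneg)
lemma yw0_sq: "(yw0 a c)^2 = 4 + (a - c)^2" unfolding yw0_def by (simp add: add_nonneg_nonneg)
lemma yw0_gt: "yw0 a c > \<bar>a - c\<bar>"
proof -
  have "sqrt ((a - c)^2) < sqrt (4 + (a - c)^2)" by (rule real_sqrt_less_mono) simp
  then show ?thesis unfolding yw0_def by simp
qed

lemma Ycond_lt:
  assumes s: "SS a b c d" and n: "\<not> (c > 0 \<and> d > 0)"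
  shows "a + c < yw0 a c"
proof (rule ccontr)
  assume "\<not> a + c < yw0 a c"
  then have ge: "a + c \<ge> yw0 a c" by simp
  then have "a + c > \<bar>a - c\<bar>" using yw0_gt[of a c] by linarith
  then have ap: "a > 0" and cp: "c > 0" by (auto simp: abs_less_iff)
  have "(a + c)^2 \<ge> (yw0 a c)^2" using ge yw0_pos[of a c] by (simp add: power_mono)
  then have "(a + c)^2 \<ge> 4 + (a - c)^2" using yw0_sq[of a c] by simp
  then have ac: "a * c \<ge> 1" by (simp add: power2_eq_square algebra_simps)
  have "a * c \<noteq> 1"
  proof
    assume "a * c = 1"
    then have "a + c^2 = 0" using SS_b[OF s] by simp
    moreover have "c^2 \<ge> 0" by simp
    ultimately show False using ap by linarith
  qed
  with ac have "a * c - 1 > 0" by simp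
  moreover have "b * (a * c - 1) > 0" using SS_b[OF s] ap by (simp add: add_pos_nonneg)
  ultimately have "b > 0" by (simp add: zero_less_mult_iff)
  then have "c > 0 \<and> d > 0" using SS_pos[OF s] ap by simp
  with n show False by simp
qed

lemma yy_lt: "a + c < yw0 a c \<Longrightarrow> yy a c < 2"
  unfolding yy_def using yw0_pos[of a c] by (simp add: field_simps)

lemma vq_of_y:
  fixes y :: real
  assumes y: "y < 2"
  shows "yq (y / sqrt (4 - 2 * y)) = sqrt (4 - 2 * y)" "(y / sqrt (4 - 2 * y)) * yq (y / sqrt (4 - 2 * y)) = y"
proof -
  define s where "s = sqrt (4 - 2 * y)"
  have sp: "s > 0" unfolding s_def using y by simp
  have s2: "s^2 = 4 - 2 * y" unfolding s_def using y by simp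
  have "(y / s)^2 + 4 = ((4 - y) / s)^2" using sp s2 by (simp add: field_simps power2_eq_square)
  then have "yr (y / s) = (4 - y) / s" unfolding yr_def using sp y by simp
  then have q: "yq (y / s) = s" unfolding yq_def using sp s2 by (simp add: field_simps power2_eq_square)
  then show "yq (y / sqrt (4 - 2 * y)) = sqrt (4 - 2 * y)" unfolding s_def .
  show "(y / sqrt (4 - 2 * y)) * yq (y / sqrt (4 - 2 * y)) = y" using q sp unfolding s_def[symmetric] by simp
qed

lemma y_of_vq: "(v * yq v) / sqrt (4 - 2 * (v * yq v)) = v" "v * yq v < 2"
proof -
  have e: "4 - 2 * (v * yq v) = (yq v)^2" using yvq[of v] by simp
  show "(v * yq v) / sqrt (4 - 2 * (v * yq v)) = v" unfolding e using yq_pos[of v] by simp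
  have "(yq v)^2 > 0" using yq_pos[of v] by simp
  then show "v * yq v < 2" using yvq[of v] by linarith
qed

lemma yv_props:
  assumes "a + c < yw0 a c"
  shows "yq (yv a c) = sqrt (4 - 2 * yy a c)" "yv a c * yq (yv a c) = yy a c"
  using vq_of_y[OF yy_lt[OF assms]] unfolding yv_def by auto

lemma yv0:
  assumes s: "SS a b c d" and lt: "a + c < yw0 a c" and v: "yv a c = 0"
  shows "a = -1 \<and> c = -1"
proof -
  have "yy a c = 0" using v yv_props(2)[OF lt] by simp
  then have e: "a + c = - yw0 a c" unfolding yy_def using yw0_pos[of a c] by (simp add: field_simps)
  then have "(a + c)^2 = 4 + (a - c)^2" using yw0_sq[of a c] by simp
  then have ac: "a * c = 1" by (simp add: power2_eq_square algebra_simps)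
  then have "a + c^2 = 0" using SS_b[OF s] by simp
  then have a: "a = -(c^2)" by simp
  then have "c^3 = -1" using ac by (simp add: power2_eq_square power3_eq_cube algebra_simps)
  then have "(c + 1) * (c^2 - c + 1) = 0" by (simp add: power2_eq_square power3_eq_cube algebra_simps)
  moreover have "c^2 - c + 1 > 0"
  proof -
    have "c^2 - c + 1 = (c - 1/2)^2 + 3/4" by (simp add: power2_eq_square algebra_simps)
    then show ?thesis by (simp add: add_nonneg_pos)
  qed
  ultimately have "c = -1" by simp
  then show ?thesis using a by simp
qed

lemma Y_right:
  assumes s: "SS a b c d" and n: "\<not> (c > 0 \<and> d > 0)"
  shows "ya (yt a b c) (yv a c) = a \<and> yc (yt a b c) (yv a c) = c \<and>
         yb (yt a b c) (yv a c) = b \<and> yd (yt a b c) (yv a c) = d"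
proof (cases "yv a c = 0")
  case True
  have lt: "a + c < yw0 a c" by (rule Ycond_lt[OF s n])
  have ac: "a = -1" "c = -1" using yv0[OF s lt True] by auto
  have t: "yt a b c = (4 - 8 * b) / 3" unfolding yt_def using True by simp
  have d: "d = 1 - b" using s ac unfolding SS_def by auto
  show ?thesis unfolding True t y0 using ac d by (simp add: field_simps)
next
  case False
  define v where "v = yv a c"
  define t where "t = yt a b c"
  have lt: "a + c < yw0 a c" by (rule Ycond_lt[OF s n])
  have tv: "t * v = a - c" unfolding t_def v_def yt_def using False by simp
  have w: "yw t v = yw0 a c" unfolding yw_def yw0_def tv ..
  have vq: "v * yq v = yy a c" unfolding v_def by (rule yv_props(2)[OF lt])
  have xi: "yxi t v = a + c" unfolding yxi_def w vq yy_def using yw0_pos[of a c] by (simp add: field_simps)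
  have A: "ya t v = a" unfolding ya_def xi tv by simp
  have C: "yc t v = c" unfolding yc_def xi tv by simp
  have E: "ya t v * yc t v - 1 \<noteq> 0" unfolding yac using False yw_pos[of t v] yq_pos[of v] unfolding v_def by simp
  have "yb t v * (a * c - 1) = b * (a * c - 1)" using ybE[of t v] SS_b[OF s] unfolding A C by simp
  then have B: "yb t v = b" using E unfolding A C by simp
  have "yd t v * (a * c - 1) = d * (a * c - 1)" using ydE[of t v] SS_d[OF s] unfolding A C by simp
  then have D: "yd t v = d" using E unfolding A C by simp
  show ?thesis using A B C D unfolding t_def v_def by simp
qed

lemma Y_left: "yv (ya t v) (yc t v) = v \<and> yt (ya t v) (yb t v) (yc t v) = t"
proof -
  have d: "ya t v - yc t v = t * v" unfolding ya_def yc_def by (simp add: field_simps)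
  have p: "ya t v + yc t v = yxi t v" unfolding ya_def yc_def by (simp add: field_simps)
  have w: "yw0 (ya t v) (yc t v) = yw t v" unfolding yw0_def yw_def d ..
  have y: "yy (ya t v) (yc t v) = v * yq v" unfolding yy_def w p yxi_def using yw_pos[of t v] by simp
  have V: "yv (ya t v) (yc t v) = v" unfolding yv_def y by (rule y_of_vq(1))
  have T: "yt (ya t v) (yb t v) (yc t v) = t"
  proof (cases "v = 0")
    case True then show ?thesis unfolding yt_def V using y0[of t] by (simp add: field_simps)
  next
    case False then show ?thesis unfolding yt_def V d by simp
  qed
  show ?thesis using V T by simp
qed

lemma Y_T2:
  assumes s: "SS a b c d" and n: "\<not> (c > 0 \<and> d > 0)"
    and nz: "(a + c - 1) * ((a - c) - (a + c) + 2) \<noteq> 0"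
  shows "yT2 a b c = yt a b c"
proof (cases "yv a c = 0")
  case True
  have lt: "a + c < yw0 a c" by (rule Ycond_lt[OF s n])
  have ac: "a = -1" "c = -1" using yv0[OF s lt True] by auto
  have w: "yw0 a c = 2" unfolding yw0_def ac by simp
  have q: "yq 0 = 2" unfolding yq_def yr_def by simp
  show ?thesis unfolding yT2_def yt_def True w q yR_def using ac by (simp add: field_simps)
next
  case False
  define v where "v = yv a c"
  define t where "t = yt a b c"
  have r: "ya t v = a" "yc t v = c" using Y_right[OF s n] unfolding t_def v_def by auto
  have tv: "t * v = a - c" unfolding t_def v_def yt_def using False by simp
  have w: "yw t v = yw0 a c" unfolding yw_def yw0_def tv ..
  have E: "a * c - 1 = - ((yw0 a c)^2 * v * (yq v)^3) / 8" using yac[of t v] unfolding r w .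
  have "(a - c) * ((a + c - 1) * ((a - c) - (a + c) + 2)) = (a * c - 1) * (2 * (b * (a + c - 2) - (a + c)))"
    using SS_ident[OF s] by (simp add: algebra_simps)
  then have "a - c = (a * c - 1) * yR a b c" unfolding yR_def using nz by (simp add: field_simps)
  then have "t * v = - ((yw0 a c)^2 * (yq v)^3 * yR a b c) / 8 * v" unfolding tv E by (simp add: algebra_simps)
  then have "t * v = (- ((yw0 a c)^2 * (yq v)^3 * yR a b c) / 8) * v" by simp
  then have "t = - ((yw0 a c)^2 * (yq v)^3 * yR a b c) / 8" using False unfolding v_def
    by (metis mult_right_cancel)
  then show ?thesis unfolding yT2_def t_def v_def by simp
qed

lemma Ymap_Y: "SS (ya t v) (yb t v) (yc t v) (yd t v) \<and> \<not> (yc t v > 0 \<and> yd t v > 0)"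
proof -
  have s: "SS (ya t v) (yb t v) (yc t v) (yd t v)" unfolding SS_def using yeqs[of t v] by simp
  moreover have "\<not> (yc t v > 0 \<and> yd t v > 0)"
  proof
    assume cd: "yc t v > 0 \<and> yd t v > 0"
    then have ab: "ya t v > 0" "yb t v > 0" using SS_pos[OF s] by auto
    have "yxi t v > 0" using ab cd unfolding ya_def yc_def by simp
    then have "v * yq v - 1 > 0" unfolding yxi_def using yw_pos[of t v] by (simp add: zero_less_mult_iff)
    then have "v > 0" using yq_pos[of v] by (smt (verit) mult_nonpos_nonneg)
    then have "ya t v * yc t v - 1 < 0" unfolding yac using yw_pos[of t v] yq_pos[of v] by simp
    moreover have "yb t v * (ya t v * yc t v - 1) = ya t v + (yc t v)^2" by (rule ybE)
    moreover have "ya t v + (yc t v)^2 > 0" using ab by (simp add: add_pos_nonneg)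
    ultimately show False using ab mult_pos_neg[of "yb t v" "ya t v * yc t v - 1"] by linarith
  qed
  ultimately show ?thesis by simp
qed

lemma X_right:
  assumes s: "SS a b c d" and cd: "c > 0" "d > 0"
  shows "(a + c) - yw0 a c > 0 \<and> xa (a - c) (pinv ((a + c) - yw0 a c)) = a \<and> xc (a - c) (pinv ((a + c) - yw0 a c)) = c \<and>
         xb (a - c) (pinv ((a + c) - yw0 a c)) = b \<and> xd (a - c) (pinv ((a + c) - yw0 a c)) = d"
proof -
  have ab: "a > 0" "b > 0" using SS_pos[OF s] cd by auto
  have "b * (a * c - 1) > 0" using SS_b[OF s] ab by (simp add: add_pos_nonneg)
  then have ac: "a * c - 1 > 0" using ab by (simp add: zero_less_mult_iff)
  have "(a + c)^2 > (yw0 a c)^2" unfolding yw0_sq using ac by (simp add: power2_eq_square algebra_simps)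
  then have ps: "(a + c) - yw0 a c > 0" using yw0_pos[of a c] cd ab
    by (smt (verit) power_mono)
  define v where "v = pinv ((a + c) - yw0 a c)"
  have pv: "psi v = (a + c) - yw0 a c" unfolding v_def using psi_pinv ps by simp
  have w: "xw (a - c) = yw0 a c" unfolding xw_def yw0_def ..
  have A: "xa (a - c) v = a" unfolding xa_def pv w by simp
  have C: "xc (a - c) v = c" unfolding xc_def pv w by simp
  have E: "a * c - 1 \<noteq> 0" using ac by simp
  have B: "xb (a - c) v = b" unfolding xb_def A C using SS_b[OF s] E by (simp add: field_simps)
  have D: "xd (a - c) v = d" unfolding xd_def A C using SS_d[OF s] E by (simp add: field_simps)
  show ?thesis using ps A B C D unfolding v_def by simp
qed

lemma X_left: "(xa z v - xc z v) = z \<and> pinv ((xa z v + xc z v) - yw0 (xa z v) (xc z v)) = v"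
proof -
  have d: "xa z v - xc z v = z" unfolding xa_def xc_def by (simp add: field_simps)
  have p: "xa z v + xc z v = xw z + psi v" unfolding xa_def xc_def by (simp add: field_simps)
  have w: "yw0 (xa z v) (xc z v) = xw z" unfolding yw0_def xw_def d ..
  show ?thesis using d unfolding p w by (simp add: pinv_psi)
qed

lemma Xmap_X: "SS (xa z v) (xb z v) (xc z v) (xd z v) \<and> xc z v > 0 \<and> xd z v > 0"
  unfolding SS_def using xeq1 xeq2 xc_pos xd_pos by auto

definition toR2 :: "real \<times> real \<Rightarrow> real \<times> real" where
  "toR2 p = (fst p / sqrt (1 - (fst p ^ 2 + snd p ^ 2)), snd p / sqrt (1 - (fst p ^ 2 + snd p ^ 2)))"
definition toBall :: "real \<times> real \<Rightarrow> real \<times> real" where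
  "toBall q = (fst q / sqrt (1 + (fst q ^ 2 + snd q ^ 2)), snd q / sqrt (1 + (fst q ^ 2 + snd q ^ 2)))"

lemma in_ball01: "p \<in> ball (0::real\<times>real) 1 \<longleftrightarrow> fst p ^ 2 + snd p ^ 2 < 1"
proof -
  have "p \<in> ball 0 1 \<longleftrightarrow> norm p < 1" by (simp add: dist_norm)
  also have "\<dots> \<longleftrightarrow> sqrt (fst p ^ 2 + snd p ^ 2) < 1"
    by (cases p) (simp add: norm_Pair)
  also have "\<dots> \<longleftrightarrow> fst p ^ 2 + snd p ^ 2 < 1" by simp
  finally show ?thesis .
qed

lemma toBall_in: "toBall q \<in> ball 0 1"
proof -
  define r where "r = fst q ^ 2 + snd q ^ 2"
  have r: "r \<ge> 0" unfolding r_def by simp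
  have "fst (toBall q) ^ 2 + snd (toBall q) ^ 2 = r / (1 + r)"
    unfolding toBall_def r_def[symmetric] using r by (simp add: power_divide add_divide_distrib r_def)
  also have "\<dots> < 1" using r by simp
  finally show ?thesis unfolding in_ball01 .
qed

lemma toR2_toBall: "toR2 (toBall q) = q"
proof -
  define r where "r = fst q ^ 2 + snd q ^ 2"
  have r: "r \<ge> 0" unfolding r_def by simp
  have e: "fst (toBall q) ^ 2 + snd (toBall q) ^ 2 = r / (1 + r)"
    unfolding toBall_def r_def[symmetric] using r by (simp add: power_divide add_divide_distrib r_def)
  have "1 - r / (1 + r) = 1 / (1 + r)" using r by (simp add: field_simps)
  then have s: "sqrt (1 - (fst (toBall q) ^ 2 + snd (toBall q) ^ 2)) = 1 / sqrt (1 + r)"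
    unfolding e by (simp add: real_sqrt_divide)
  have p: "sqrt (1 + r) > 0" using r by simp
  show ?thesis unfolding toR2_def s using p by (simp add: toBall_def r_def[symmetric])
qed

lemma toBall_toR2: "p \<in> ball 0 1 \<Longrightarrow> toBall (toR2 p) = p"
proof -
  assume "p \<in> ball 0 1"
  then have r1: "fst p ^ 2 + snd p ^ 2 < 1" unfolding in_ball01 .
  define r where "r = fst p ^ 2 + snd p ^ 2"
  have r: "r \<ge> 0" "r < 1" using r1 unfolding r_def by auto
  have e: "fst (toR2 p) ^ 2 + snd (toR2 p) ^ 2 = r / (1 - r)"
    unfolding toR2_def r_def[symmetric] using r by (simp add: power_divide add_divide_distrib r_def)
  have "1 + r / (1 - r) = 1 / (1 - r)" using r by (simp add: field_simps)
  then have s: "sqrt (1 + (fst (toR2 p) ^ 2 + snd (toR2 p) ^ 2)) = 1 / sqrt (1 - r)"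
    unfolding e by (simp add: real_sqrt_divide)
  have p: "sqrt (1 - r) > 0" using r by simp
  show ?thesis unfolding toBall_def s using p by (simp add: toR2_def r_def[symmetric])
qed

lemma sm_toR2: "sm (ball 0 1) (\<lambda>p. fst (toR2 p))" "sm (ball 0 1) (\<lambda>p. snd (toR2 p))"
proof -
  have h: "\<forall>p\<in>ball (0::real\<times>real) 1. 0 < 1 - (fst p ^ 2 + snd p ^ 2)"
  proof
    fix p :: "real \<times> real" assume "p \<in> ball 0 1"
    then have "fst p ^ 2 + snd p ^ 2 < 1" by (simp only: in_ball01)
    then show "0 < 1 - (fst p ^ 2 + snd p ^ 2)" by simp
  qed
  then have h2: "\<forall>p\<in>ball 0 1. sqrt (1 - (fst p ^ 2 + snd p ^ 2)) \<noteq> 0" by auto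
  have q: "sm (ball 0 1) (\<lambda>p. sqrt (1 - (fst p ^ 2 + snd p ^ 2)))"
    by (rule sm_sqrt[OF _ h]) (intro sm_diff sm_add sm_power sm_fst sm_snd sm_id sm_const)
  show "sm (ball 0 1) (\<lambda>p. fst (toR2 p))" unfolding toR2_def fst_conv
    by (rule sm_divide[OF _ q h2]) (intro sm_fst sm_id)
  show "sm (ball 0 1) (\<lambda>p. snd (toR2 p))" unfolding toR2_def snd_conv
    by (rule sm_divide[OF _ q h2]) (intro sm_snd sm_id)
qed

lemma sm_toBall: "sm U F \<Longrightarrow> sm U G \<Longrightarrow> sm U (\<lambda>x. toBall (F x, G x))"
proof -
  assume F: "sm U F" and G: "sm U G"
  have h: "\<forall>p\<in>U. 0 < 1 + ((F p) ^ 2 + (G p) ^ 2)" by (simp add: add_pos_nonneg)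
  then have h2: "\<forall>p\<in>U. sqrt (1 + ((F p) ^ 2 + (G p) ^ 2)) \<noteq> 0" by auto
  have q: "sm U (\<lambda>p. sqrt (1 + ((F p) ^ 2 + (G p) ^ 2)))"
    by (rule sm_sqrt[OF _ h]) (intro sm_add sm_power F G sm_const)
  show ?thesis unfolding toBall_def fst_conv snd_conv
    by (intro sm_Pair sm_divide[OF F q h2] sm_divide[OF G q h2])
qed

lemma sm_yw: "sm U T \<Longrightarrow> sm U V \<Longrightarrow> sm U (\<lambda>x. yw (T x) (V x))"
  unfolding yw_def by (intro sm_sqrt sm_add sm_power sm_mult sm_const ballI) (auto simp: add_pos_nonneg)
lemma sm_yq: "sm U V \<Longrightarrow> sm U (\<lambda>x. yq (V x))"
  unfolding yq_def yr_def by (intro sm_diff sm_sqrt sm_add sm_power sm_const ballI) (auto simp: add_nonneg_pos)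
lemma sm_yxi: "sm U T \<Longrightarrow> sm U V \<Longrightarrow> sm U (\<lambda>x. yxi (T x) (V x))"
  unfolding yxi_def by (intro sm_mult sm_diff sm_yw sm_yq sm_const)
lemma sm_ya: "sm U T \<Longrightarrow> sm U V \<Longrightarrow> sm U (\<lambda>x. ya (T x) (V x))"
  unfolding ya_def by (intro sm_divide sm_add sm_mult sm_yxi sm_const ballI) auto
lemma sm_yc: "sm U T \<Longrightarrow> sm U V \<Longrightarrow> sm U (\<lambda>x. yc (T x) (V x))"
  unfolding yc_def by (intro sm_divide sm_diff sm_mult sm_yxi sm_const ballI) auto
lemma sm_yK: "sm U T \<Longrightarrow> sm U V \<Longrightarrow> sm U (\<lambda>x. yK (T x) (V x))"
  unfolding yK_def by (intro sm_diff sm_mult sm_yw sm_yq)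
lemma sm_yL: "sm U T \<Longrightarrow> sm U V \<Longrightarrow> sm U (\<lambda>x. yL (T x) (V x))"
  unfolding yL_def by (intro sm_add sm_mult sm_yw sm_yq)
lemma sm_yB: "sm U T \<Longrightarrow> sm U V \<Longrightarrow> sm U (\<lambda>x. yB (T x) (V x))"
proof -
  assume T: "sm U T" and V: "sm U V"
  have nz: "\<forall>x\<in>U. yw (T x) (V x) + 2 \<noteq> 0" using yw_pos by (smt (verit))
  show ?thesis unfolding yB_def
    by (intro sm_add sm_diff sm_mult sm_power sm_divide[OF _ _ nz] sm_yw sm_yK sm_yL sm_const T V)
qed
lemma sm_yD: "sm U T \<Longrightarrow> sm U V \<Longrightarrow> sm U (\<lambda>x. yD (T x) (V x))"
proof -
  assume T: "sm U T" and V: "sm U V"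
  have nz: "\<forall>x\<in>U. yw (T x) (V x) + 2 \<noteq> 0" using yw_pos by (smt (verit))
  show ?thesis unfolding yD_def
    by (intro sm_add sm_diff sm_mult sm_power sm_divide[OF _ _ nz] sm_yw sm_yK sm_yL sm_const T V)
qed
lemma sm_yb: "sm U T \<Longrightarrow> sm U V \<Longrightarrow> sm U (\<lambda>x. yb (T x) (V x))"
proof -
  assume T: "sm U T" and V: "sm U V"
  have nz: "\<forall>x\<in>U. (yw (T x) (V x))^2 * (yq (V x))^3 \<noteq> 0" using yw_pos yq_pos by (simp add: less_imp_neq[symmetric] order_less_imp_not_eq2)
  show ?thesis unfolding yb_def
    by (intro sm_divide[OF _ _ nz] sm_mult sm_power sm_yw sm_yq sm_yB sm_const T V)
qed
lemma sm_yd: "sm U T \<Longrightarrow> sm U V \<Longrightarrow> sm U (\<lambda>x. yd (T x) (V x))"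
proof -
  assume T: "sm U T" and V: "sm U V"
  have nz: "\<forall>x\<in>U. (yw (T x) (V x))^2 * (yq (V x))^3 \<noteq> 0" using yw_pos yq_pos by (simp add: less_imp_neq[symmetric] order_less_imp_not_eq2)
  show ?thesis unfolding yd_def
    by (intro sm_divide[OF _ _ nz] sm_mult sm_power sm_yw sm_yq sm_yD sm_const T V)
qed

lemma sm_yw0: "sm U A \<Longrightarrow> sm U C \<Longrightarrow> sm U (\<lambda>x. yw0 (A x) (C x))"
  unfolding yw0_def by (intro sm_sqrt sm_add sm_power sm_diff sm_const ballI) (auto simp: add_pos_nonneg)
lemma sm_yy: "sm U A \<Longrightarrow> sm U C \<Longrightarrow> sm U (\<lambda>x. yy (A x) (C x))"
proof -
  assume A: "sm U A" and C: "sm U C"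
  have nz: "\<forall>x\<in>U. yw0 (A x) (C x) \<noteq> 0" using yw0_pos by (smt (verit))
  show ?thesis unfolding yy_def by (intro sm_add sm_divide[OF _ _ nz] sm_yw0 sm_const A C)
qed
lemma sm_yv: "sm U A \<Longrightarrow> sm U C \<Longrightarrow> (\<forall>x\<in>U. A x + C x < yw0 (A x) (C x)) \<Longrightarrow> sm U (\<lambda>x. yv (A x) (C x))"
proof -
  assume A: "sm U A" and C: "sm U C" and lt: "\<forall>x\<in>U. A x + C x < yw0 (A x) (C x)"
  have p: "\<forall>x\<in>U. 0 < 4 - 2 * yy (A x) (C x)" using lt yy_lt by fastforce
  then have nz: "\<forall>x\<in>U. sqrt (4 - 2 * yy (A x) (C x)) \<noteq> 0" by auto
  have q: "sm U (\<lambda>x. sqrt (4 - 2 * yy (A x) (C x)))"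
    by (rule sm_sqrt[OF _ p]) (intro sm_diff sm_mult sm_yy sm_const A C)
  show ?thesis unfolding yv_def by (rule sm_divide[OF _ q nz]) (intro sm_yy A C)
qed
lemma sm_yR: "sm U A \<Longrightarrow> sm U B \<Longrightarrow> sm U C \<Longrightarrow> (\<forall>x\<in>U. (A x + C x - 1) * ((A x - C x) - (A x + C x) + 2) \<noteq> 0)
   \<Longrightarrow> sm U (\<lambda>x. yR (A x) (B x) (C x))"
  unfolding yR_def by (intro sm_divide sm_mult sm_add sm_diff sm_const) auto
lemma sm_yT2: "sm U A \<Longrightarrow> sm U B \<Longrightarrow> sm U C \<Longrightarrow> (\<forall>x\<in>U. (A x + C x - 1) * ((A x - C x) - (A x + C x) + 2) \<noteq> 0)
   \<Longrightarrow> (\<forall>x\<in>U. A x + C x < yw0 (A x) (C x)) \<Longrightarrow> sm U (\<lambda>x. yT2 (A x) (B x) (C x))"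
  unfolding yT2_def by (intro sm_divide sm_uminus sm_mult sm_power sm_yw0 sm_yq sm_yv sm_yR sm_const ballI) auto

lemma sm_pinv: "sm U P \<Longrightarrow> (\<forall>x\<in>U. P x \<noteq> 0) \<Longrightarrow> sm U (\<lambda>x. pinv (P x))"
  unfolding pinv_def by (intro sm_divide sm_diff sm_mult sm_power sm_const) auto

definition Sset :: "(real \<times> real \<times> real \<times> real) set" where
  "Sset = {(w, x, y, z). w + x + y + z = 3 + w * y \<and> w * y = z * x}"
definition Xs :: "(real \<times> real \<times> real \<times> real) set" where
  "Xs = {(w, x, y, z) \<in> Sset. x > 1 \<and> z > 1}"
definition Ys :: "(real \<times> real \<times> real \<times> real) set" where
  "Ys = Sset - Xs"

definition qa :: "real \<times> real \<times> real \<times> real \<Rightarrow> real" where "qa q = fst q - 1"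
definition qc :: "real \<times> real \<times> real \<times> real \<Rightarrow> real" where "qc q = fst (snd q) - 1"
definition qb :: "real \<times> real \<times> real \<times> real \<Rightarrow> real" where "qb q = fst (snd (snd q)) - 1"
definition qd :: "real \<times> real \<times> real \<times> real \<Rightarrow> real" where "qd q = snd (snd (snd q)) - 1"

lemma sm_q: "sm U qa" "sm U qb" "sm U qc" "sm U qd"
  unfolding qa_def qb_def qc_def qd_def by (intro sm_diff sm_fst sm_snd sm_id sm_const)+

lemma q_eq: "q = (1 + qa q, 1 + qc q, 1 + qb q, 1 + qd q)"
  unfolding qa_def qb_def qc_def qd_def by (cases q) auto

lemma q_mk: "qa (1 + a, 1 + c, 1 + b, 1 + d) = a" "qb (1 + a, 1 + c, 1 + b, 1 + d) = b"
  "qc (1 + a, 1 + c, 1 + b, 1 + d) = c" "qd (1 + a, 1 + c, 1 + b, 1 + d) = d"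
  unfolding qa_def qb_def qc_def qd_def by auto

lemma Sset_iff: "q \<in> Sset \<longleftrightarrow> SS (qa q) (qb q) (qc q) (qd q)"
  unfolding Sset_def qa_def qb_def qc_def qd_def by (cases q) (auto simp: S_iff)

lemma Xs_iff: "q \<in> Xs \<longleftrightarrow> SS (qa q) (qb q) (qc q) (qd q) \<and> qc q > 0 \<and> qd q > 0"
  unfolding Xs_def using Sset_iff[of q] unfolding qa_def qb_def qc_def qd_def by (cases q) auto

lemma Ys_iff: "q \<in> Ys \<longleftrightarrow> SS (qa q) (qb q) (qc q) (qd q) \<and> \<not> (qc q > 0 \<and> qd q > 0)"
  unfolding Ys_def using Sset_iff[of q] Xs_iff[of q] by auto

definition fX :: "real \<times> real \<Rightarrow> real \<times> real \<times> real \<times> real" where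
  "fX p = (1 + xa (fst (toR2 p)) (snd (toR2 p)), 1 + xc (fst (toR2 p)) (snd (toR2 p)),
           1 + xb (fst (toR2 p)) (snd (toR2 p)), 1 + xd (fst (toR2 p)) (snd (toR2 p)))"
definition gX :: "real \<times> real \<times> real \<times> real \<Rightarrow> real \<times> real" where
  "gX q = toBall (qa q - qc q, pinv ((qa q + qc q) - yw0 (qa q) (qc q)))"
definition fY :: "real \<times> real \<Rightarrow> real \<times> real \<times> real \<times> real" where
  "fY p = (1 + ya (fst (toR2 p)) (snd (toR2 p)), 1 + yc (fst (toR2 p)) (snd (toR2 p)),
           1 + yb (fst (toR2 p)) (snd (toR2 p)), 1 + yd (fst (toR2 p)) (snd (toR2 p)))"
definition gY :: "real \<times> real \<times> real \<times> real \<Rightarrow> real \<times> real" where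
  "gY q = toBall (yt (qa q) (qb q) (qc q), yv (qa q) (qc q))"

lemma sm_fX: "sm (ball 0 1) fX"
proof -
  have "sm (ball 0 1) (\<lambda>p. fX p)" unfolding fX_def
    by (intro sm_Pair sm_add sm_const sm_xa sm_xb sm_xc sm_xd sm_toR2)
  then show ?thesis by simp
qed

lemma sm_fY: "sm (ball 0 1) fY"
proof -
  have "sm (ball 0 1) (\<lambda>p. fY p)" unfolding fY_def
    by (intro sm_Pair sm_add sm_const sm_ya sm_yb sm_yc sm_yd sm_toR2)
  then show ?thesis by simp
qed

lemma smooth_map_ball: "sm (ball 0 1) f \<Longrightarrow> smooth_map (ball 0 1) f"
  unfolding smooth_map_def using smooth_on_sm[OF open_ball] by blast

lemma diffeo_X: "diffeo_betw fX (ball 0 1) Xs"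
proof -
  have img1: "fX p \<in> Xs" for p
    unfolding Xs_iff fX_def q_mk using Xmap_X by auto
  have img2: "gX q \<in> ball 0 1" for q unfolding gX_def by (rule toBall_in)
  have left: "gX (fX p) = p" if "p \<in> ball 0 1" for p
  proof -
    have "gX (fX p) = toBall (toR2 p)" unfolding gX_def fX_def q_mk
      using X_left[of "fst (toR2 p)" "snd (toR2 p)"] by simp
    then show ?thesis using toBall_toR2[OF that] by simp
  qed
  have right: "fX (gX q) = q" if "q \<in> Xs" for q
  proof -
    have s: "SS (qa q) (qb q) (qc q) (qd q)" "qc q > 0" "qd q > 0" using that Xs_iff by auto
    have "fX (gX q) = (1 + qa q, 1 + qc q, 1 + qb q, 1 + qd q)"
      unfolding fX_def gX_def toR2_toBall fst_conv snd_conv using X_right[OF s] by simp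
    then show ?thesis using q_eq[of q] by simp
  qed
  have bij: "bij_betw fX (ball 0 1) Xs"
    by (rule bij_betw_byWitness[where f' = gX]) (use left right img1 img2 in auto)
  have smX: "smooth_map (ball 0 1) fX" by (rule smooth_map_ball[OF sm_fX])
  have smG: "smooth_map Xs gX"
    unfolding smooth_map_def
  proof
    fix q assume q: "q \<in> Xs"
    define P where "P = (\<lambda>q. (qa q + qc q) - yw0 (qa q) (qc q))"
    define U where "U = {q. 0 < P q}"
    have smP: "sm UNIV P" unfolding P_def by (intro sm_diff sm_add sm_yw0 sm_q)
    have oU: "open U" unfolding U_def
      by (rule open_Collect_less) (use sm_cont[OF smP] in auto)
    have qU: "q \<in> U" unfolding U_def P_def using X_right q Xs_iff by auto
    have "sm U gX"
    proof -
      have "sm U (\<lambda>q. gX q)" unfolding gX_def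
        by (intro sm_toBall sm_diff sm_q sm_pinv sm_subset[OF smP[unfolded P_def]])
           (auto simp: U_def P_def)
      then show ?thesis by simp
    qed
    then show "\<exists>U F. open U \<and> q \<in> U \<and> smooth_on U F \<and> (\<forall>y\<in>U \<inter> Xs. F y = gX y)"
      using oU qU smooth_on_sm[OF oU] by blast
  qed
  show ?thesis unfolding diffeo_betw_def using bij smX smG left right by blast
qed

lemma diffeo_Y: "diffeo_betw fY (ball 0 1) Ys"
proof -
  have img1: "fY p \<in> Ys" for p
    unfolding Ys_iff fY_def q_mk using Ymap_Y by auto
  have img2: "gY q \<in> ball 0 1" for q unfolding gY_def by (rule toBall_in)
  have left: "gY (fY p) = p" if "p \<in> ball 0 1" for p
  proof -
    have "gY (fY p) = toBall (toR2 p)" unfolding gY_def fY_def q_mk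
      using Y_left[of "fst (toR2 p)" "snd (toR2 p)"] by simp
    then show ?thesis using toBall_toR2[OF that] by simp
  qed
  have right: "fY (gY q) = q" if "q \<in> Ys" for q
  proof -
    have s: "SS (qa q) (qb q) (qc q) (qd q)" "\<not> (qc q > 0 \<and> qd q > 0)" using that Ys_iff by auto
    have "fY (gY q) = (1 + qa q, 1 + qc q, 1 + qb q, 1 + qd q)"
      unfolding fY_def gY_def toR2_toBall fst_conv snd_conv using Y_right[OF s] by simp
    then show ?thesis using q_eq[of q] by simp
  qed
  have bij: "bij_betw fY (ball 0 1) Ys"
    by (rule bij_betw_byWitness[where f' = gY]) (use left right img1 img2 in auto)
  have smF: "smooth_map (ball 0 1) fY" by (rule smooth_map_ball[OF sm_fY])
  have smG: "smooth_map Ys gY"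
    unfolding smooth_map_def
  proof
    fix q assume q: "q \<in> Ys"
    have s: "SS (qa q) (qb q) (qc q) (qd q)" "\<not> (qc q > 0 \<and> qd q > 0)" using q Ys_iff by auto
    define Ow where "Ow = {q. qa q + qc q < yw0 (qa q) (qc q)}"
    have oO: "open Ow" unfolding Ow_def
      by (rule open_Collect_less) (use sm_cont[OF sm_add[OF sm_q(1) sm_q(3)]] sm_cont[OF sm_yw0[OF sm_q(1) sm_q(3)]] in auto)
    have qO: "q \<in> Ow" unfolding Ow_def using Ycond_lt[OF s] by simp
    have smv: "sm Ow (\<lambda>q. yv (qa q) (qc q))" by (rule sm_yv[OF sm_q(1) sm_q(3)]) (simp add: Ow_def)
    show "\<exists>U F. open U \<and> q \<in> U \<and> smooth_on U F \<and> (\<forall>y\<in>U \<inter> Ys. F y = gY y)"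
    proof (cases "yv (qa q) (qc q) = 0")
      case False
      define U where "U = Ow \<inter> (\<lambda>q. yv (qa q) (qc q)) -` (- {0})"
      have oU: "open U" unfolding U_def
        by (rule continuous_open_preimage[OF sm_cont[OF smv] oO]) (simp add: open_Compl)
      have qU: "q \<in> U" unfolding U_def using qO False by simp
      define F where "F = (\<lambda>q. toBall ((qa q - qc q) / yv (qa q) (qc q), yv (qa q) (qc q)))"
      have "sm U (\<lambda>q. F q)" unfolding F_def
        by (intro sm_toBall sm_divide sm_diff sm_q sm_subset[OF smv]) (auto simp: U_def)
      then have "smooth_on U F" by (rule smooth_on_sm[OF oU])
      moreover have "\<forall>y\<in>U \<inter> Ys. F y = gY y"
        unfolding F_def gY_def yt_def U_def by auto
      ultimately show ?thesis using oU qU by blast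
    next
      case True
      define N where "N = (\<lambda>q. (qa q + qc q - 1) * ((qa q - qc q) - (qa q + qc q) + 2))"
      have smN: "sm UNIV N" unfolding N_def by (intro sm_mult sm_add sm_diff sm_q sm_const)
      define U where "U = Ow \<inter> N -` (- {0})"
      have oU: "open U" unfolding U_def
        by (rule continuous_open_preimage[OF continuous_on_subset[OF sm_cont[OF smN]] oO]) (auto simp: open_Compl)
      have ac: "qa q = -1" "qc q = -1" using yv0[OF s(1) qO[unfolded Ow_def, simplified] True] by auto
      have qU: "q \<in> U" unfolding U_def N_def using qO ac by simp
      define F where "F = (\<lambda>q. toBall (yT2 (qa q) (qb q) (qc q), yv (qa q) (qc q)))"
      have "sm U (\<lambda>q. F q)" unfolding F_def
        by (intro sm_toBall sm_yT2 sm_q sm_subset[OF smv]) (auto simp: U_def Ow_def N_def)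
      then have "smooth_on U F" by (rule smooth_on_sm[OF oU])
      moreover have "\<forall>y\<in>U \<inter> Ys. F y = gY y"
      proof
        fix y assume y: "y \<in> U \<inter> Ys"
        have sy: "SS (qa y) (qb y) (qc y) (qd y)" "\<not> (qc y > 0 \<and> qd y > 0)" using y Ys_iff by auto
        have "N y \<noteq> 0" using y unfolding U_def by auto
        then have "yT2 (qa y) (qb y) (qc y) = yt (qa y) (qb y) (qc y)"
          by (intro Y_T2[OF sy]) (simp add: N_def)
        then show "F y = gY y" unfolding F_def gY_def by simp
      qed
      ultimately show ?thesis using oU qU by blast
    qed
  qed
  show ?thesis unfolding diffeo_betw_def using bij smF smG left right by blast
qed

lemma comps2:
  assumes SXY: "S = X \<union> Y" and d: "X \<inter> Y = {}" and cX: "connected X" and cY: "connected Y"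
    and nX: "X \<noteq> {}" and nY: "Y \<noteq> {}"
    and oX: "openin (top_of_set S) X" and oY: "openin (top_of_set S) Y"
  shows "components S = {X, Y}"
proof -
  obtain UX where UX: "open UX" "X = S \<inter> UX" using oX unfolding openin_open by blast
  obtain UY where UY: "open UY" "Y = S \<inter> UY" using oY unfolding openin_open by blast
  have sub: "D \<subseteq> X" if "connected D" "D \<subseteq> S" "D \<inter> X \<noteq> {}" for D
  proof -
    have "UX \<inter> UY \<inter> D = {}" using that(2) UX UY d by blast
    moreover have "D \<subseteq> UX \<union> UY" using that(2) UX UY SXY by blast
    ultimately have "UX \<inter> D = {} \<or> UY \<inter> D = {}" using connectedD[OF that(1) UX(1) UY(1)] by blast
    then show ?thesis using that(2,3) UX UY SXY by blast
  qed
  have subY: "D \<subseteq> Y" if "connected D" "D \<subseteq> S" "D \<inter> Y \<noteq> {}" for D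
  proof -
    have "UY \<inter> UX \<inter> D = {}" using that(2) UX UY d by blast
    moreover have "D \<subseteq> UY \<union> UX" using that(2) UX UY SXY by blast
    ultimately have "UY \<inter> D = {} \<or> UX \<inter> D = {}" using connectedD[OF that(1) UY(1) UX(1)] by blast
    then show ?thesis using that(2,3) UX UY SXY by blast
  qed
  have X: "X \<in> components S" unfolding in_components_maximal
    using nX cX SXY sub by blast
  have Y: "Y \<in> components S" unfolding in_components_maximal
    using nY cY SXY subY by blast
  have "C \<in> {X, Y}" if C: "C \<in> components S" for C
  proof -
    have "C \<noteq> {}" "C \<subseteq> S" using in_components_nonempty[OF C] in_components_subset[OF C] by auto
    then have "C \<inter> X \<noteq> {} \<or> C \<inter> Y \<noteq> {}" using SXY by blast
    then show ?thesis using components_eq[OF C X] components_eq[OF C Y] by auto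
  qed
  then show ?thesis using X Y by blast
qed

lemma X_big:
  assumes s: "SS a b c d" and cd: "c > 0" "d > 0"
  shows "c + d \<ge> 4"
proof -
  have ab: "a > 0" "b > 0" using SS_pos[OF s] cd by auto
  define u where "u = c + d"
  have u: "u > 0" unfolding u_def using cd by simp
  have e1: "a * b = u" "c * d = a + b" using s unfolding SS_def u_def by auto
  have "(a + b)^2 - 4 * (a * b) = (a - b)^2" by (simp add: power2_eq_square algebra_simps)
  then have "4 * (a * b) \<le> (a + b)^2" using zero_le_power2[of "a - b"] by linarith
  then have i1: "4 * u \<le> (c * d)^2" using e1 by simp
  have "(c + d)^2 - 4 * (c * d) = (c - d)^2" by (simp add: power2_eq_square algebra_simps)
  then have "4 * (c * d) \<le> u^2" unfolding u_def using zero_le_power2[of "c - d"] by linarith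
  then have "c * d \<le> u^2 / 4" by simp
  then have "(c * d)^2 \<le> (u^2 / 4)^2" using cd by (intro power_mono) auto
  with i1 have i2: "4 * u \<le> u^4 / 16" by (simp add: power_divide power_mult_distrib flip: power_mult)
  show ?thesis
  proof (rule ccontr)
    assume "\<not> c + d \<ge> 4"
    then have "u < 4" unfolding u_def by simp
    then have "u^3 < 4^3" using u by (intro power_strict_mono) auto
    then have "u * u^3 < u * 64" using u by simp
    then have "u^4 < 64 * u" by (simp add: power_def algebra_simps)
    with i2 show False by simp
  qed
qed

lemma X_conv:
  assumes s: "SS a b c d" and cd: "c \<ge> 0" "d \<ge> 0" "c + d \<ge> 4"
  shows "c > 0 \<and> d > 0"
proof (rule ccontr)
  assume "\<not> (c > 0 \<and> d > 0)"
  then have "c = 0 \<or> d = 0" using cd by auto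
  then obtain e where e: "a + b = 0" "a * b = e" "e \<ge> 4" using s cd unfolding SS_def by auto
  then have "b = -a" by simp
  then have "a * b = - (a^2)" by (simp add: power2_eq_square)
  moreover have "a^2 \<ge> 0" by simp
  ultimately show False using e by linarith
qed

lemma Xs_open: "openin (top_of_set Sset) Xs"
proof -
  have e: "Xs = Sset \<inter> ({q. 0 < qc q} \<inter> {q. 0 < qd q})" using Xs_iff Sset_iff by auto
  have o: "open ({q. 0 < qc q} \<inter> {q. 0 < qd q})"
    by (intro open_Int open_Collect_less) (use sm_cont[OF sm_q(3)] sm_cont[OF sm_q(4)] in auto)
  show ?thesis unfolding e by (rule openin_open_Int[OF o])
qed

lemma Ys_open: "openin (top_of_set Sset) Ys"
proof -
  have e: "Ys = Sset \<inter> ({q. qc q < 0} \<union> {q. qd q < 0} \<union> {q. qc q + qd q < 4})"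
  proof (intro set_eqI iffI)
    fix q assume "q \<in> Ys"
    then have s: "SS (qa q) (qb q) (qc q) (qd q)" "\<not> (qc q > 0 \<and> qd q > 0)" using Ys_iff by auto
    then show "q \<in> Sset \<inter> ({q. qc q < 0} \<union> {q. qd q < 0} \<union> {q. qc q + qd q < 4})"
    proof -
      have "qc q < 0 \<or> qd q < 0 \<or> qc q + qd q < 4"
      proof (rule ccontr)
        assume "\<not> (qc q < 0 \<or> qd q < 0 \<or> qc q + qd q < 4)"
        then have "qc q \<ge> 0" "qd q \<ge> 0" "qc q + qd q \<ge> 4" by auto
        then show False using X_conv[OF s(1)] s(2) by blast
      qed
      then show ?thesis using s(1) Sset_iff by auto
    qed
  next
    fix q assume q: "q \<in> Sset \<inter> ({q. qc q < 0} \<union> {q. qd q < 0} \<union> {q. qc q + qd q < 4})"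
    then have s: "SS (qa q) (qb q) (qc q) (qd q)" using Sset_iff by auto
    have "\<not> (qc q > 0 \<and> qd q > 0)"
    proof
      assume h: "qc q > 0 \<and> qd q > 0"
      then have "qc q + qd q \<ge> 4" using X_big[OF s] by blast
      then show False using q h by auto
    qed
    then show "q \<in> Ys" using s Ys_iff by blast
  qed
  have o: "open ({q. qc q < 0} \<union> {q. qd q < 0} \<union> {q. qc q + qd q < 4})"
    by (intro open_Un open_Collect_less)
       (use sm_cont[OF sm_q(3)] sm_cont[OF sm_q(4)] sm_cont[OF sm_add[OF sm_q(3) sm_q(4)]] in auto)
  show ?thesis unfolding e by (rule openin_open_Int[OF o])
qed

lemma components_Sset: "components Sset = {Xs, Ys}" and XY_facts: "Xs \<noteq> Ys" "Xs \<noteq> {}" "Ys \<noteq> {}"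
proof -
  have bX: "bij_betw fX (ball 0 1) Xs" using diffeo_X unfolding diffeo_betw_def by blast
  have bY: "bij_betw fY (ball 0 1) Ys" using diffeo_Y unfolding diffeo_betw_def by blast
  have cX: "connected Xs" using connected_continuous_image[OF sm_cont[OF sm_fX] connected_ball] bij_betw_imp_surj_on[OF bX] by simp
  have cY: "connected Ys" using connected_continuous_image[OF sm_cont[OF sm_fY] connected_ball] bij_betw_imp_surj_on[OF bY] by simp
  have nX: "Xs \<noteq> {}" using bij_betw_imp_surj_on[OF bX] by auto
  have nY: "Ys \<noteq> {}" using bij_betw_imp_surj_on[OF bY] by auto
  have U: "Sset = Xs \<union> Ys" unfolding Ys_def Xs_def by auto
  have D: "Xs \<inter> Ys = {}" unfolding Ys_def by auto
  show "components Sset = {Xs, Ys}" by (rule comps2[OF U D cX cY nX nY Xs_open Ys_open])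
  show "Xs \<noteq> Ys" "Xs \<noteq> {}" "Ys \<noteq> {}" using D nX nY by auto
qed

theorem lemma3p2:
  fixes S :: "(real \<times> real \<times> real \<times> real) set"
  defines "S \<equiv> {(w, x, y, z). w + x + y + z = 3 + w * y \<and> w * y = z * x}"
  shows "smooth_surface S
    \<and> card (components S) = 2
    \<and> (\<forall>C\<in>components S. diffeomorphic_sets (ball (0 :: real \<times> real) 1) C)
    \<and> (\<exists>X\<in>components S.
          (3, 3, 3, 3) \<in> X
        \<and> X = {(w, x, y, z) \<in> S. x > 1 \<and> z > 1}
        \<and> X = {(w, x, y, z) \<in> S. y > 1 \<and> w > 1})"
proof -
  have SS: "S = Sset" unfolding S_def Sset_def ..
  have X1: "{(w, x, y, z) \<in> S. x > 1 \<and> z > 1} = Xs" unfolding SS Xs_def ..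
  have X2: "{(w, x, y, z) \<in> S. y > 1 \<and> w > 1} = Xs"
  proof (intro set_eqI)
    fix q :: "real \<times> real \<times> real \<times> real"
    have "q \<in> {(w, x, y, z) \<in> S. y > 1 \<and> w > 1} \<longleftrightarrow> q \<in> Sset \<and> qb q > 0 \<and> qa q > 0"
      unfolding SS qa_def qb_def by (cases q) auto
    also have "\<dots> \<longleftrightarrow> q \<in> Xs" unfolding Xs_iff Sset_iff using SS_pos by blast
    finally show "q \<in> {(w, x, y, z) \<in> S. y > 1 \<and> w > 1} \<longleftrightarrow> q \<in> Xs" .
  qed
  have dX: "diffeomorphic_sets (ball (0 :: real \<times> real) 1) Xs"
    unfolding diffeomorphic_sets_def using diffeo_X by blast
  have dY: "diffeomorphic_sets (ball (0 :: real \<times> real) 1) Ys"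
    unfolding diffeomorphic_sets_def using diffeo_Y by blast
  have C: "components S = {Xs, Ys}" unfolding SS by (rule components_Sset)
  have surf: "smooth_surface S"
    unfolding smooth_surface_def
  proof
    fix p assume "p \<in> S"
    then have "p \<in> Xs \<or> p \<in> Ys" unfolding SS Ys_def by blast
    then show "\<exists>W (U :: (real \<times> real) set). openin (top_of_set S) W \<and> p \<in> W \<and> open U \<and> diffeomorphic_sets U W"
      using Xs_open Ys_open dX dY open_ball unfolding SS by blast
  qed
  have card: "card (components S) = 2" unfolding C using XY_facts by simp
  have pt: "(3, 3, 3, 3) \<in> Xs" unfolding Xs_def Sset_def by simp
  show ?thesis using surf card C dX dY pt X1 X2 by auto
qed

end
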